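(* Let $p\in(0,1)$ be fixed, let $C$ be a positive integer, and let $\mathcal{E}\subset[n]^2$ be such that, for every $i\in[n]$, $$ \left|\{j\in[n]:(i,j)\in\mathcal{E}\}\right|\leqslant C,\qquad \left|\{j\in[n]:(j,i)\in\mathcal{E}\}\right|\leqslant C. $$ Then the probability that there exists a perfect matching in $G(n,n,p)$ containing no edge from $\mathcal{E}$ is $1-e^{-\Omega(n)}$.
   Context: $G(n,n,p)$ is the random bipartite graph obtained from the complete bipartite graph $K_{n,n}$, whose two parts are each identified with $[n]$, by keeping each edge independently with probability $p$; a pair $(i,j)\in[n]^2$ is identified with the edge between vertex $i$ of the first part and vertex $j$ of the second part. $\Omega(n)$ refers to $n\to\infty$ with $p$ and $C$ fixed. *)

theory Defs
  imports "HOL-Probability.Probability"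
begin

text \<open>G(n,n,p): the random bipartite graph on two copies of [n] = {1..n}; a graph is
  represented by its edge indicator G :: nat \<times> nat \<Rightarrow> bool, where G (i,j) means that
  vertex i of the first part is joined to vertex j of the second part.\<close>
definition random_bipartite :: "nat \<Rightarrow> real \<Rightarrow> (nat \<times> nat \<Rightarrow> bool) pmf" where
  "random_bipartite n p = Pi_pmf ({1..n} \<times> {1..n}) False (\<lambda>_. bernoulli_pmf p)"

definition has_pm_avoiding :: "nat \<Rightarrow> (nat \<times> nat \<Rightarrow> bool) \<Rightarrow> (nat \<times> nat) set \<Rightarrow> bool" where
  "has_pm_avoiding n G E \<longleftrightarrow>
     (\<exists>\<sigma>. \<sigma> permutes {1..n} \<and> (\<forall>i\<in>{1..n}. G (i, \<sigma> i) \<and> (i, \<sigma> i) \<notin> E))"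

end

theory Submission
  imports Defs "HOL-Real_Asymp.Real_Asymp"
begin

lemma two_elems: assumes "2 \<le> card X" obtains x y where "x \<in> X" "y \<in> X" "x \<noteq> y"
proof -
  have "finite X" using assms card.infinite by fastforce
  from assms obtain Y where "Y \<subseteq> X" "card Y = 2"
    by (meson \<open>finite X\<close> obtain_subset_with_card_n)
  then show ?thesis using that by (auto simp: card_2_iff)
qed

lemma hall_aux:
  fixes A :: "'a set"
  assumes A: "finite A"
  shows "\<forall>N :: 'a \<Rightarrow> 'b set. (\<Sum>a\<in>A. card (N a)) = k \<longrightarrow> (\<forall>a\<in>A. finite (N a)) \<longrightarrow>
     (\<forall>S\<subseteq>A. card S \<le> card (\<Union>(N ` S))) \<longrightarrow> (\<exists>f. inj_on f A \<and> (\<forall>a\<in>A. f a \<in> N a))"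
proof (induction k rule: less_induct)
  case (less k)
  show ?case
  proof (intro allI impI)
    fix N :: "'a \<Rightarrow> 'b set"
    assume k: "(\<Sum>a\<in>A. card (N a)) = k" and fin: "\<forall>a\<in>A. finite (N a)"
      and H: "\<forall>S\<subseteq>A. card S \<le> card (\<Union>(N ` S))"
    show "\<exists>f. inj_on f A \<and> (\<forall>a\<in>A. f a \<in> N a)"
    proof (cases "\<exists>a\<in>A. 2 \<le> card (N a)")
      case False
      have single: "\<exists>y. N a = {y}" if "a \<in> A" for a
      proof -
        have "card {a} \<le> card (N a)" using H that by (metis cSup_singleton empty_subsetI image_insert image_empty insert_subset)
        moreover have "card (N a) < 2" using False that by auto
        ultimately have "card (N a) = 1" by simp
        then show ?thesis by (simp add: card_1_singleton_iff)
      qed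
      define f where "f a = the_elem (N a)" for a
      have fN: "N a = {f a}" if "a \<in> A" for a using single[OF that] f_def by auto
      have "inj_on f A"
      proof (rule inj_onI, rule ccontr)
        fix a b assume ab: "a \<in> A" "b \<in> A" "f a = f b" "a \<noteq> b"
        have "{a, b} \<subseteq> A" using ab by auto
        then have "card {a, b} \<le> card (\<Union>(N ` {a, b}))" using H by blast
        also have "\<Union>(N ` {a, b}) = {f a}" using fN ab by auto
        finally show False using ab by simp
      qed
      then show ?thesis using fN by auto
    next
      case True
      then obtain a where a: "a \<in> A" "2 \<le> card (N a)" by blast
      then obtain x1 x2 where x12: "x1 \<in> N a" "x2 \<in> N a" "x1 \<noteq> x2" using two_elems by metis
      have finU: "finite (\<Union>(N ` A))" using A fin by blast
      have key: "\<exists>x\<in>{x1,x2}. \<forall>S\<subseteq>A. card S \<le> card (\<Union>((N(a := N a - {x})) ` S))"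
      proof (rule ccontr)
        assume "\<not> ?thesis"
        then obtain S1 S2 where S1: "S1 \<subseteq> A" "card (\<Union>((N(a := N a - {x1})) ` S1)) < card S1"
          and S2: "S2 \<subseteq> A" "card (\<Union>((N(a := N a - {x2})) ` S2)) < card S2"
          by (auto simp: not_le)
        define U1 where "U1 = \<Union>((N(a := N a - {x1})) ` S1)"
        define U2 where "U2 = \<Union>((N(a := N a - {x2})) ` S2)"
        have aS1: "a \<in> S1"
        proof (rule ccontr)
          assume "a \<notin> S1"
          then have "(N(a := N a - {x1})) ` S1 = N ` S1" by auto
          then show False using S1 H by (metis not_le)
        qed
        have aS2: "a \<in> S2"
        proof (rule ccontr)
          assume "a \<notin> S2"
          then have "(N(a := N a - {x2})) ` S2 = N ` S2" by auto
          then show False using S2 H by (metis not_le)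
        qed
        have fU1: "finite U1" unfolding U1_def
          by (rule finite_subset[OF _ finU]) (use S1 a in auto)
        have fU2: "finite U2" unfolding U2_def
          by (rule finite_subset[OF _ finU]) (use S2 a in auto)
        have fS1: "finite S1" "finite S2" using S1 S2 A finite_subset by auto
        have sub1: "\<Union>(N ` (S1 \<union> S2)) \<subseteq> U1 \<union> U2"
          unfolding U1_def U2_def using aS1 aS2 x12 by fastforce
        have sub2: "\<Union>(N ` (S1 \<inter> S2 - {a})) \<subseteq> U1 \<inter> U2"
          unfolding U1_def U2_def by fastforce
        have c1: "card (S1 \<union> S2) \<le> card (U1 \<union> U2)"
          using H S1 S2 sub1 fU1 fU2
          by (meson card_mono finite_UnI le_sup_iff order_trans)
        have c2: "card (S1 \<inter> S2 - {a}) \<le> card (U1 \<inter> U2)"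
          using H S1 S2 sub2 fU1 fU2
          by (meson card_mono finite_Int Diff_subset inf.coboundedI1 order_trans)
        have c3: "card (S1 \<inter> S2 - {a}) + 1 = card (S1 \<inter> S2)"
          using aS1 aS2 fS1 by (metis IntI Suc_eq_plus1 card_Suc_Diff1 finite_Int)
        have "card U1 + card U2 = card (U1 \<union> U2) + card (U1 \<inter> U2)" using card_Un_Int fU1 fU2 by blast
        moreover have "card S1 + card S2 = card (S1 \<union> S2) + card (S1 \<inter> S2)" using card_Un_Int fS1 by blast
        moreover have "card U1 < card S1" "card U2 < card S2" using S1 S2 U1_def U2_def by auto
        ultimately show False using c1 c2 c3 by linarith
      qed
      then obtain x where x: "x \<in> N a" and HN: "\<forall>S\<subseteq>A. card S \<le> card (\<Union>((N(a := N a - {x})) ` S))"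
        using x12 by blast
      define N' where "N' = N(a := N a - {x})"
      have "(\<Sum>b\<in>A. card (N' b)) = card (N' a) + (\<Sum>b\<in>A - {a}. card (N' b))"
        using A a by (simp add: sum.remove)
      also have "(\<Sum>b\<in>A - {a}. card (N' b)) = (\<Sum>b\<in>A - {a}. card (N b))"
        unfolding N'_def by (rule sum.cong) auto
      also have "card (N' a) < card (N a)" unfolding N'_def using x fin a
        by (simp add: card_Diff1_less)
      also have "card (N a) + (\<Sum>b\<in>A - {a}. card (N b)) = k" using k A a by (simp add: sum.remove)
      finally have lt: "(\<Sum>b\<in>A. card (N' b)) < k" by simp
      have "\<forall>b\<in>A. finite (N' b)" using fin unfolding N'_def by auto
      then obtain f where f: "inj_on f A" "\<forall>b\<in>A. f b \<in> N' b"
        using less.IH[OF lt] HN N'_def by blast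
      have "\<forall>b\<in>A. f b \<in> N b" using f(2) unfolding N'_def by (metis Diff_iff fun_upd_apply)
      then show ?thesis using f(1) by blast
    qed
  qed
qed

lemma hall:
  assumes "finite A" "\<forall>a\<in>A. finite (N a)" "\<forall>S\<subseteq>A. card S \<le> card (\<Union>(N ` S))"
  shows "\<exists>f. inj_on f A \<and> (\<forall>a\<in>A. f a \<in> N a)"
  using hall_aux[OF assms(1)] assms(2,3) by blast

lemma prob_empty_edges:
  assumes "D \<subseteq> {1..n} \<times> {1..n}" "0 \<le> p" "p \<le> 1"
  shows "measure_pmf.prob (random_bipartite n p) {G. \<forall>x\<in>D. \<not> G x} = (1 - p) ^ card D"
proof -
  define I where "I = {1..n} \<times> {1..(n::nat)}"
  define B where "B x = (if x \<in> D then {False} else UNIV)" for x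
  have "{G. \<forall>x\<in>D. \<not> G x} = Pi I B" using assms(1) unfolding I_def B_def Pi_def by auto
  then have "measure_pmf.prob (random_bipartite n p) {G. \<forall>x\<in>D. \<not> G x}
     = (\<Prod>x\<in>I. measure_pmf.prob (bernoulli_pmf p) (B x))"
    unfolding random_bipartite_def I_def by (simp add: measure_Pi_pmf_Pi)
  also have "\<dots> = (\<Prod>x\<in>I. if x \<in> D then 1 - p else 1)"
    by (rule prod.cong) (auto simp: B_def measure_pmf_single assms)
  also have "\<dots> = (1 - p) ^ card D"
  proof -
    have "(\<Prod>x\<in>I. if x \<in> D then 1 - p else 1) = (\<Prod>x\<in>D. 1 - p)"
      using assms(1) unfolding I_def by (intro prod.mono_neutral_cong_right) auto
    then show ?thesis by simp
  qed
  finally show ?thesis .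
qed

lemma card_bound:
  fixes n C s t :: nat and E :: "(nat \<times> nat) set"
  assumes S: "S \<subseteq> {1..n}" "card S = s" and T: "T \<subseteq> {1..n}" "card T = t" and st: "s + t = n + 1"
    and deg: "\<forall>i\<in>{1..n}. card {j\<in>{1..n}. (i, j) \<in> E} \<le> C \<and> card {j\<in>{1..n}. (j, i) \<in> E} \<le> C"
  shows "real (min s t) * (real n / 2 - real C) \<le> real (card (S \<times> T - E))"
proof -
  have fS: "finite S" "finite T" using S T finite_subset by auto
  have r1: "card (S \<times> T \<inter> E) \<le> C * s"
  proof -
    have "S \<times> T \<inter> E \<subseteq> Sigma S (\<lambda>i. {j\<in>{1..n}. (i, j) \<in> E})" using T by auto
    then have "card (S \<times> T \<inter> E) \<le> card (Sigma S (\<lambda>i. {j\<in>{1..n}. (i, j) \<in> E}))"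
      by (rule card_mono[rotated]) (use fS in auto)
    also have "\<dots> = (\<Sum>i\<in>S. card {j\<in>{1..n}. (i, j) \<in> E})" using fS by (simp)
    also have "\<dots> \<le> (\<Sum>i\<in>S. C)" using deg S by (intro sum_mono) auto
    finally show ?thesis using S by (simp add: mult.commute)
  qed
  have r2: "card (S \<times> T \<inter> E) \<le> C * t"
  proof -
    have "S \<times> T \<inter> E \<subseteq> (\<lambda>(j, i). (i, j)) ` Sigma T (\<lambda>j. {i\<in>{1..n}. (i, j) \<in> E})"
    proof
      fix x assume "x \<in> S \<times> T \<inter> E"
      then obtain a b where "x = (a, b)" "a \<in> S" "b \<in> T" "(a, b) \<in> E" by auto
      then show "x \<in> (\<lambda>(j, i). (i, j)) ` Sigma T (\<lambda>j. {i\<in>{1..n}. (i, j) \<in> E})"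
        using S by (intro image_eqI[of _ _ "(b, a)"]) auto
    qed
    then have "card (S \<times> T \<inter> E) \<le> card ((\<lambda>(j, i). (i, j)) ` Sigma T (\<lambda>j. {i\<in>{1..n}. (i, j) \<in> E}))"
      by (rule card_mono[rotated]) (use fS in auto)
    also have "\<dots> \<le> card (Sigma T (\<lambda>j. {i\<in>{1..n}. (i, j) \<in> E}))" by (rule card_image_le) (use fS in auto)
    also have "\<dots> = (\<Sum>j\<in>T. card {i\<in>{1..n}. (i, j) \<in> E})" using fS by (simp)
    also have "\<dots> \<le> (\<Sum>j\<in>T. C)" using deg T by (intro sum_mono) auto
    finally show ?thesis using T by (simp add: mult.commute)
  qed
  have cd: "card (S \<times> T - E) = s * t - card (S \<times> T \<inter> E)"
    using fS S T by (simp add: card_Diff_subset_Int card_cartesian_product)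
  have le: "card (S \<times> T \<inter> E) \<le> s * t"
    using fS S T by (metis card_cartesian_product card_mono finite_cartesian_product inf_le1)
  have R: "real (card (S \<times> T - E)) = real s * real t - real (card (S \<times> T \<inter> E))"
    using cd le by (simp add: of_nat_diff)
  show ?thesis
  proof (cases "s \<le> t")
    case True
    then have "real t \<ge> real n / 2" using st by linarith
    then have "real s * (real n / 2 - real C) \<le> real s * (real t - real C)" by (intro mult_left_mono) auto
    moreover have "real (card (S \<times> T \<inter> E)) \<le> real C * real s" using r1 by (metis of_nat_le_iff of_nat_mult)
    ultimately show ?thesis using True R by (simp add: algebra_simps)
  next
    case False
    then have "real s \<ge> real n / 2" using st by linarith
    then have "real t * (real n / 2 - real C) \<le> real t * (real s - real C)" by (intro mult_left_mono) auto
    moreover have "real (card (S \<times> T \<inter> E)) \<le> real C * real t" using r2 by (metis of_nat_le_iff of_nat_mult)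
    ultimately show ?thesis using False R by (simp add: algebra_simps)
  qed
qed

lemma binom_bound:
  assumes "s \<in> {1..n}"
  shows "(n choose s) * (n choose (n + 1 - s)) \<le> (n ^ 2) ^ min s (n + 1 - s)"
proof -
  have n1: "n \<ge> 1" and s1: "1 \<le> s" and sn: "s \<le> n" using assms by auto
  define m where "m = min s (n + 1 - s)"
  have pw: "n ^ a \<le> n ^ b" if "a \<le> b" for a b by (rule power_increasing[OF that]) (use n1 in simp)
  have sym1: "n choose (n + 1 - s) = n choose (s - 1)"
  proof -
    have "n + 1 - s = n - (s - 1)" using s1 sn by simp
    then show ?thesis using binomial_symmetric[of "s - 1" n] sn by (metis diff_le_self le_trans)
  qed
  have sym2: "n choose s = n choose (n - s)" using binomial_symmetric[of s n] sn by blast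
  have b1: "n choose s \<le> n ^ m"
  proof (cases "s \<le> n + 1 - s")
    case True
    then have "m = s" unfolding m_def by simp
    then show ?thesis using binomial_le_pow[OF sn] by simp
  next
    case False
    then have "m = n + 1 - s" unfolding m_def by simp
    have "n choose s \<le> n ^ (n - s)" unfolding sym2 by (rule binomial_le_pow) simp
    also have "\<dots> \<le> n ^ m" using \<open>m = n + 1 - s\<close> by (intro pw) simp
    finally show ?thesis .
  qed
  have b2: "n choose (n + 1 - s) \<le> n ^ m"
  proof (cases "s \<le> n + 1 - s")
    case True
    then have "m = s" unfolding m_def by simp
    have "n choose (n + 1 - s) \<le> n ^ (s - 1)" unfolding sym1 by (rule binomial_le_pow) (use sn in simp)
    also have "\<dots> \<le> n ^ m" using \<open>m = s\<close> by (intro pw) simp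
    finally show ?thesis .
  next
    case False
    then have "m = n + 1 - s" unfolding m_def by simp
    have "n + 1 - s \<le> n" using s1 by simp
    from binomial_le_pow[OF this] show ?thesis using \<open>m = n + 1 - s\<close> by simp
  qed
  have "(n choose s) * (n choose (n + 1 - s)) \<le> n ^ m * n ^ m"
    using b1 b2 by (rule mult_le_mono)
  also have "\<dots> = (n ^ 2) ^ m" by (metis power2_eq_square power_mult_distrib)
  finally show ?thesis unfolding m_def .
qed
lemma ev_bound:
  fixes L K :: real assumes "L > 0"
  shows "eventually (\<lambda>n::nat. real n ^ 3 * exp K \<le> exp (real n * L / 4)) at_top"
  using assms by real_asymp

lemma witness:
  assumes "\<not> has_pm_avoiding n G E"
  shows "\<exists>s\<in>{1..n}. \<exists>S T. S \<subseteq> {1..n} \<and> card S = s \<and> T \<subseteq> {1..n} \<and> card T = n + 1 - s \<and>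
           (\<forall>y\<in>S \<times> T - E. \<not> G y)"
proof -
  define Nb where "Nb i = {j\<in>{1..n}. G (i, j) \<and> (i, j) \<notin> E}" for i
  have "\<not> (\<forall>S\<subseteq>{1..n}. card S \<le> card (\<Union>(Nb ` S)))"
  proof
    assume H: "\<forall>S\<subseteq>{1..n}. card S \<le> card (\<Union>(Nb ` S))"
    have "\<forall>a\<in>{1..n}. finite (Nb a)" unfolding Nb_def by auto
    from hall[OF _ this H] obtain f where f: "inj_on f {1..n}" "\<forall>i\<in>{1..n}. f i \<in> Nb i" by auto
    have fsub: "f ` {1..n} \<subseteq> {1..n}" using f(2) unfolding Nb_def by auto
    have "card (f ` {1..n}) = card {1..n}" using f(1) by (simp add: card_image)
    then have fim: "f ` {1..n} = {1..n}" using fsub by (simp add: card_subset_eq)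
    define \<sigma> where "\<sigma> i = (if i \<in> {1..n} then f i else i)" for i
    have "bij_betw f {1..n} {1..n}" using f(1) fim by (simp add: bij_betw_def)
    moreover have "bij_betw \<sigma> {1..n} {1..n} = bij_betw f {1..n} {1..n}" by (rule bij_betw_cong) (auto simp: \<sigma>_def)
    ultimately have "bij_betw \<sigma> {1..n} {1..n}" by simp
    then have "\<sigma> permutes {1..n}" by (rule bij_imp_permutes) (auto simp: \<sigma>_def)
    moreover have "\<forall>i\<in>{1..n}. G (i, \<sigma> i) \<and> (i, \<sigma> i) \<notin> E" using f(2) unfolding \<sigma>_def Nb_def by auto
    ultimately have "has_pm_avoiding n G E" unfolding has_pm_avoiding_def by blast
    then show False using assms by blast
  qed
  then obtain S where S: "S \<subseteq> {1..n}" "card (\<Union>(Nb ` S)) < card S" by (auto simp: not_le)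
  define U where "U = \<Union>(Nb ` S)"
  have U: "U \<subseteq> {1..n}" unfolding U_def Nb_def by auto
  have sn: "card S \<le> n" using S(1) by (metis card_atLeastAtMost card_mono diff_Suc_1 finite_atLeastAtMost)
  have s1: "1 \<le> card S" using S(2) by simp
  have "card ({1..n} - U) = n - card U" using U by (simp add: card_Diff_subset finite_subset)
  then have "n + 1 - card S \<le> card ({1..n} - U)" using S(2) sn unfolding U_def[symmetric] by linarith
  then obtain T where T: "T \<subseteq> {1..n} - U" "card T = n + 1 - card S"
    by (meson finite_Diff finite_atLeastAtMost obtain_subset_with_card_n)
  have "\<forall>y\<in>S \<times> T - E. \<not> G y"
  proof
    fix y assume y: "y \<in> S \<times> T - E"
    then obtain i j where ij: "y = (i, j)" "i \<in> S" "j \<in> T" "(i, j) \<notin> E" by auto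
    show "\<not> G y"
    proof
      assume "G y"
      then have "j \<in> Nb i" using ij T(1) unfolding Nb_def by auto
      then have "j \<in> U" using ij unfolding U_def by auto
      then show False using ij T(1) by auto
    qed
  qed
  moreover have "T \<subseteq> {1..n}" using T(1) by auto
  ultimately show ?thesis using S(1) T(2) sn s1 by (intro bexI[of _ "card S"]) auto
qed

theorem lemma9:
  fixes p :: real and C :: nat
  assumes "0 < p" and "p < 1" and "C > 0"
  shows "\<exists>c>0. \<exists>N. \<forall>n\<ge>N. \<forall>E. E \<subseteq> {1..n} \<times> {1..n} \<longrightarrow>
           (\<forall>i\<in>{1..n}. card {j\<in>{1..n}. (i, j) \<in> E} \<le> C \<and> card {j\<in>{1..n}. (j, i) \<in> E} \<le> C) \<longrightarrow>
           measure_pmf.prob (random_bipartite n p) {G. has_pm_avoiding n G E} \<ge> 1 - exp (- c * real n)"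
proof -
  define q where "q = 1 - p"
  have q: "0 < q" "q < 1" using assms unfolding q_def by auto
  define L where "L = - ln q"
  have L: "L > 0" using q unfolding L_def by simp
  define c where "c = L / 4"
  have c: "c > 0" using L unfolding c_def by simp
  have powr_eq: "q powr y = exp (- L * y)" for y using q unfolding L_def powr_def by simp
  obtain N0 where N0: "\<And>n. n \<ge> N0 \<Longrightarrow> real n ^ 3 * exp (L * real C) \<le> exp (real n * L / 4)"
    using ev_bound[OF L, of "L * real C"] unfolding eventually_at_top_linorder by blast
  have bnd: "real n ^ 3 * q powr (real n / 2 - real C) \<le> exp (- c * real n)" if "n \<ge> N0" for n
  proof -
    have "real n ^ 3 * q powr (real n / 2 - real C) = real n ^ 3 * exp (L * real C) * exp (- L * real n / 2)"
      unfolding powr_eq by (simp add: algebra_simps flip: exp_add)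
    also have "\<dots> \<le> exp (real n * L / 4) * exp (- L * real n / 2)"
      using N0[OF that] by (intro mult_right_mono) auto
    also have "\<dots> = exp (- c * real n)" unfolding c_def by (simp flip: exp_add)
    finally show ?thesis .
  qed
  show ?thesis
  proof (intro exI[of _ c] conjI c exI[of _ "max N0 1"] allI impI)
    fix n :: nat and E :: "(nat \<times> nat) set"
    assume n: "max N0 1 \<le> n" and E: "E \<subseteq> {1..n} \<times> {1..n}"
      and deg: "\<forall>i\<in>{1..n}. card {j\<in>{1..n}. (i, j) \<in> E} \<le> C \<and> card {j\<in>{1..n}. (j, i) \<in> E} \<le> C"
    define y where "y = q powr (real n / 2 - real C)"
    define x where "x = real n ^ 2 * y"
    have y0: "0 \<le> y" unfolding y_def by simp
    have x0: "0 \<le> x" unfolding x_def using y0 by simp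
    have nx: "real n * x \<le> exp (- c * real n)" using bnd[of n] n unfolding x_def y_def
      by (simp add: power3_eq_cube power2_eq_square mult.assoc)
    have "exp (- c * real n) \<le> 1" using c by simp
    moreover have "x \<le> real n * x" using n x0 by (simp add: mult_le_cancel_right1)
    ultimately have x1: "x \<le> 1" using nx by linarith
    define Sub where "Sub k = {S. S \<subseteq> {1..n} \<and> card S = k}" for k
    define W where "W = Sigma {1..n} (\<lambda>s. Sub s \<times> Sub (n + 1 - s))"
    define Ev where "Ev w = {G :: nat \<times> nat \<Rightarrow> bool. \<forall>z\<in>fst (snd w) \<times> snd (snd w) - E. \<not> G z}" for w :: "nat \<times> nat set \<times> nat set"
    have finSub: "finite (Sub k)" for k unfolding Sub_def by auto
    have finW: "finite W" unfolding W_def using finSub by auto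
    have sub: "{G. \<not> has_pm_avoiding n G E} \<subseteq> (\<Union>w\<in>W. Ev w)"
    proof
      fix G assume "G \<in> {G. \<not> has_pm_avoiding n G E}"
      then obtain s S T where "s \<in> {1..n}" "S \<subseteq> {1..n}" "card S = s" "T \<subseteq> {1..n}" "card T = n + 1 - s"
        "\<forall>y\<in>S \<times> T - E. \<not> G y" using witness by blast
      then show "G \<in> (\<Union>w\<in>W. Ev w)" unfolding W_def Sub_def Ev_def
        by (intro UN_I[of "(s, S, T)"]) auto
    qed
    have evb: "measure_pmf.prob (random_bipartite n p) (Ev w) \<le> y ^ min (fst w) (n + 1 - fst w)"
      if "w \<in> W" for w
    proof -
      obtain s S T where w: "w = (s, S, T)" by (cases w) auto
      have ST: "s \<in> {1..n}" "S \<subseteq> {1..n}" "card S = s" "T \<subseteq> {1..n}" "card T = n + 1 - s"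
        using that unfolding w W_def Sub_def by auto
      have D: "S \<times> T - E \<subseteq> {1..n} \<times> {1..n}" using ST by auto
      have "measure_pmf.prob (random_bipartite n p) (Ev w) = q ^ card (S \<times> T - E)"
        unfolding Ev_def w q_def using prob_empty_edges[OF D] assms by simp
      also have "\<dots> = q powr real (card (S \<times> T - E))" using q by (simp add: powr_realpow)
      also have "\<dots> \<le> q powr (real (min s (n + 1 - s)) * (real n / 2 - real C))"
        using card_bound[OF ST(2,3) ST(4,5) _ deg] ST(1) q by (intro powr_mono') auto
      also have "\<dots> = y ^ min s (n + 1 - s)" unfolding y_def using q
        by (simp add: powr_powr powr_realpow[symmetric] mult.commute)
      finally show ?thesis unfolding w by simp
    qed
    have "measure_pmf.prob (random_bipartite n p) {G. \<not> has_pm_avoiding n G E}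
        \<le> measure_pmf.prob (random_bipartite n p) (\<Union>w\<in>W. Ev w)"
      using sub by (intro measure_pmf.finite_measure_mono) auto
    also have "\<dots> \<le> (\<Sum>w\<in>W. measure_pmf.prob (random_bipartite n p) (Ev w))"
      using finW by (intro measure_pmf.finite_measure_subadditive_finite) auto
    also have "\<dots> \<le> (\<Sum>w\<in>W. y ^ min (fst w) (n + 1 - fst w))"
      using evb by (intro sum_mono) auto
    also have "\<dots> = (\<Sum>s\<in>{1..n}. (\<Sum>ST\<in>Sub s \<times> Sub (n + 1 - s). y ^ min s (n + 1 - s)))"
      unfolding W_def using finSub by (subst sum.Sigma) (auto simp: case_prod_beta)
    also have "\<dots> = (\<Sum>s\<in>{1..n}. real ((n choose s) * (n choose (n + 1 - s))) * y ^ min s (n + 1 - s))"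
    proof (rule sum.cong[OF refl])
      fix s assume "s \<in> {1..n}"
      have "card (Sub k) = n choose k" for k unfolding Sub_def using n_subsets[of "{1..n}" k] by simp
      then show "(\<Sum>ST\<in>Sub s \<times> Sub (n + 1 - s). y ^ min s (n + 1 - s))
          = real ((n choose s) * (n choose (n + 1 - s))) * y ^ min s (n + 1 - s)"
        by (simp add: card_cartesian_product)
    qed
    also have "\<dots> \<le> (\<Sum>s\<in>{1..n}. x)"
    proof (rule sum_mono)
      fix s assume s: "s \<in> {1..n}"
      define m where "m = min s (n + 1 - s)"
      have m1: "m \<ge> 1" using s unfolding m_def by auto
      have "real ((n choose s) * (n choose (n + 1 - s))) \<le> real ((n ^ 2) ^ m)"
        using binom_bound[OF s] unfolding m_def by (simp only: of_nat_le_iff)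
      then have "real ((n choose s) * (n choose (n + 1 - s))) * y ^ m \<le> real ((n ^ 2) ^ m) * y ^ m"
        using y0 by (intro mult_right_mono) auto
      also have "\<dots> = x ^ m" unfolding x_def by (simp add: power_mult_distrib)
      also have "\<dots> \<le> x ^ 1" using x0 x1 m1 by (intro power_decreasing) auto
      finally show "real ((n choose s) * (n choose (n + 1 - s))) * y ^ min s (n + 1 - s) \<le> x"
        unfolding m_def by simp
    qed
    also have "\<dots> = real n * x" by simp
    also have "\<dots> \<le> exp (- c * real n)" by (rule nx)
    finally have bad: "measure_pmf.prob (random_bipartite n p) {G. \<not> has_pm_avoiding n G E} \<le> exp (- c * real n)" .
    have "measure_pmf.prob (random_bipartite n p) {G. has_pm_avoiding n G E}
        = 1 - measure_pmf.prob (random_bipartite n p) {G. \<not> has_pm_avoiding n G E}"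
      using measure_pmf.prob_compl[of "{G. has_pm_avoiding n G E}" "random_bipartite n p"]
      by (simp add: Compl_eq_Diff_UNIV[symmetric] Collect_neg_eq[symmetric])
    then show "1 - exp (- c * real n) \<le> measure_pmf.prob (random_bipartite n p) {G. has_pm_avoiding n G E}"
      using bad by linarith
  qed
qed

end
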